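(* There is a universal constant $K_2>0$ such that for all $\alpha_m>0$, $\theta\in(0,1)$ and $h,\alpha_s,\eta>0$, \[ E^{1D}_{h,\alpha_s,\eta,\theta}\le \min\left(\alpha_m\eta^2,\ \alpha_m\eta^2\theta+K_2\frac{h^2\eta}{1-\theta}\right)h . \] The first bound is attained by $u=w=0$; the second by taking $u=w=0$ on a bonded interval of length $\theta$ and a single blister with zero value of $|w_x+\frac12u_x^2-\eta|$ on the complementary interval of length $1-\theta$.
   Context: Let $\mathbb T^1=\mathbb R/\mathbb Z$. Fix parameters $\alpha_m>0$, $h>0$, $\alpha_s>0$, $\eta>0$ and $\theta\in(0,1)$. The admissible class $\mathcal A^{1D}$ consists of triples $(w,u,\Omega)$ with $w\in H^1(\mathbb T^1;\mathbb R)$, $u\in H^2(\mathbb T^1;[0,\infty))$, $\Omega\subset\mathbb T^1$ closed with Lebesgue measure $|\Omega|=\theta$, and $u=0$ on $\Omega$. The energy is \[ E^{1D}[w,u,\Omega]=\alpha_m h\int_0^1\Big|w_x+\tfrac12 u_x^2-\eta\Big|^2dx+h^3\int_0^1|u_{xx}|^2dx+\alpha_s\Big(\int_\Omega|w_x|^2dx\Big)^{1/2}\Big(\int_\Omega|w|^2dx\Big)^{1/2}, \] and $E^{1D}_{h,\alpha_s,\eta,\theta}:=\inf_{(w,u,\Omega)\in\mathcal A^{1D}}E^{1D}[w,u,\Omega]$. *)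

theory Defs
  imports "HOL-Analysis.Analysis"
begin

text \<open>T^1 = R/Z is represented by the interval [0,1] with endpoints identified.\<close>

definition H1_per :: "(real \<Rightarrow> real) \<Rightarrow> (real \<Rightarrow> real) \<Rightarrow> bool" where
  "H1_per f f' \<longleftrightarrow>
     set_integrable lborel {0..1} f' \<and>
     set_integrable lborel {0..1} (\<lambda>x. (f' x)^2) \<and>
     (\<forall>x\<in>{0..1}. f x = f 0 + (LINT t:{0..x}|lborel. f' t)) \<and>
     f 1 = f 0"

definition H2_per :: "(real \<Rightarrow> real) \<Rightarrow> (real \<Rightarrow> real) \<Rightarrow> (real \<Rightarrow> real) \<Rightarrow> bool" where
  "H2_per f f' f'' \<longleftrightarrow> H1_per f f' \<and> H1_per f' f''"

definition closed_T1 :: "real set \<Rightarrow> bool" where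
  "closed_T1 S \<longleftrightarrow> closed S \<and> S \<subseteq> {0..1} \<and> (0 \<in> S \<longleftrightarrow> 1 \<in> S)"

definition admissible_1D ::
  "real \<Rightarrow> (real \<Rightarrow> real) \<Rightarrow> (real \<Rightarrow> real) \<Rightarrow> (real \<Rightarrow> real) \<Rightarrow> (real \<Rightarrow> real)
   \<Rightarrow> (real \<Rightarrow> real) \<Rightarrow> real set \<Rightarrow> bool" where
  "admissible_1D \<theta> w w' u u' u'' \<Omega> \<longleftrightarrow>
     H1_per w w' \<and> H2_per u u' u'' \<and> (\<forall>x\<in>{0..1}. u x \<ge> 0) \<and>
     closed_T1 \<Omega> \<and> measure lborel \<Omega> = \<theta> \<and> (\<forall>x\<in>\<Omega>. u x = 0)"

definition energy_1D ::
  "real \<Rightarrow> real \<Rightarrow> real \<Rightarrow> real \<Rightarrow> (real \<Rightarrow> real) \<Rightarrow> (real \<Rightarrow> real) \<Rightarrow> (real \<Rightarrow> real)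
   \<Rightarrow> (real \<Rightarrow> real) \<Rightarrow> real set \<Rightarrow> real" where
  "energy_1D \<alpha>m h \<alpha>s \<eta> w w' u' u'' \<Omega> =
     \<alpha>m * h * (LINT x:{0..1}|lborel. (w' x + (u' x)^2 / 2 - \<eta>)^2)
     + h^3 * (LINT x:{0..1}|lborel. (u'' x)^2)
     + \<alpha>s * sqrt (LINT x:\<Omega>|lborel. (w' x)^2) * sqrt (LINT x:\<Omega>|lborel. (w x)^2)"

definition E_inf_1D :: "real \<Rightarrow> real \<Rightarrow> real \<Rightarrow> real \<Rightarrow> real \<Rightarrow> real" where
  "E_inf_1D \<alpha>m h \<alpha>s \<eta> \<theta> =
     Inf {energy_1D \<alpha>m h \<alpha>s \<eta> w w' u' u'' \<Omega> | w w' u u' u'' \<Omega>.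
            admissible_1D \<theta> w w' u u' u'' \<Omega>}"

end

theory Submission
  imports Defs
begin

lemma split_int:
  fixes g :: "real \<Rightarrow> real"
  assumes g: "continuous_on UNIV g" and L: "0 \<le> L" "L \<le> x"
  shows "set_integrable lborel {0..x} (\<lambda>t. if t \<le> L then g t else c)"
    "(LINT t:{0..x}|lborel. (if t \<le> L then g t else c)) = (LINT t:{0..L}|lborel. g t) + c*(x-L)"
proof -
  have A0: "set_integrable lborel {0..L} g"
    unfolding set_integrable_def
    by (rule borel_integrable_compact) (auto intro: continuous_on_subset[OF g])
  have A: "set_integrable lborel {0..L} (\<lambda>t. if t \<le> L then g t else c)"
    using A0 by (rule set_integrable_cong[THEN iffD1, rotated -1]) auto
  have B0: "set_integrable lborel {L..x} (\<lambda>t. c)"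
    unfolding set_integrable_def
    by (rule borel_integrable_compact) (auto intro: continuous_intros)
  have B1: "set_integrable lborel {L<..x} (\<lambda>t. c)"
    by (rule set_integrable_subset[OF B0]) auto
  have B: "set_integrable lborel {L<..x} (\<lambda>t. if t \<le> L then g t else c)"
    using B1 by (rule set_integrable_cong[THEN iffD1, rotated -1]) auto
  have U: "{0..x} = {0..L} \<union> {L<..x}" using L by auto
  show "set_integrable lborel {0..x} (\<lambda>t. if t \<le> L then g t else c)"
    unfolding U by (rule set_integrable_Un[OF A B]) auto
  have "(LINT t:{0..x}|lborel. (if t \<le> L then g t else c)) =
     (LINT t:{0..L}|lborel. (if t \<le> L then g t else c)) + (LINT t:{L<..x}|lborel. (if t \<le> L then g t else c))"
    unfolding U by (rule set_integral_Un[OF _ A B]) auto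
  also have "(LINT t:{0..L}|lborel. (if t \<le> L then g t else c)) = (LINT t:{0..L}|lborel. g t)"
    by (rule set_lebesgue_integral_cong) auto
  also have "(LINT t:{L<..x}|lborel. (if t \<le> L then g t else c)) = (LINT t:{L<..x}|lborel. c)"
    by (rule set_lebesgue_integral_cong) auto
  also have "\<dots> = c * (x - L)"
    using L by (subst set_integral_const) auto
  finally show "(LINT t:{0..x}|lborel. (if t \<le> L then g t else c)) = (LINT t:{0..L}|lborel. g t) + c*(x-L)" .
qed

lemma ftc:
  fixes g G :: "real \<Rightarrow> real"
  assumes "\<And>x. (G has_real_derivative g x) (at x)" "continuous_on UNIV g" "0 \<le> x"
  shows "(LINT t:{0..x}|lborel. g t) = G x - G 0"
proof -
  have "(LBINT t=ereal 0..ereal x. g t) = G x - G 0"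
    by (rule interval_integral_FTC_finite)
      (use assms in \<open>auto intro: continuous_on_subset has_vector_derivative_at_within has_field_derivative_at_within
          simp: has_real_derivative_iff_has_vector_derivative[symmetric]\<close>)
  then show ?thesis using assms(3) interval_integral_Icc[of 0 x g] by simp
qed

lemma H1_pw:
  fixes g G :: "real \<Rightarrow> real"
  assumes L: "0 < L" "L < 1" and D: "\<And>x. (G has_real_derivative g x) (at x)"
    and g: "continuous_on UNIV g" and G0: "G 0 = 0" and GL: "G L = 0"
  shows "H1_per (\<lambda>x. if x \<le> L then G x else 0) (\<lambda>x. if x \<le> L then g x else 0)"
  unfolding H1_per_def
proof (intro conjI ballI)
  show "set_integrable lborel {0..1} (\<lambda>x. if x \<le> L then g x else 0)"
    using split_int(1)[OF g, of L 1 0] L by simp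
  have g2: "continuous_on UNIV (\<lambda>x. (g x)^2)" using g by (intro continuous_intros)
  have e: "(\<lambda>x. (if x \<le> L then g x else 0)^2) = (\<lambda>x. if x \<le> L then (g x)^2 else 0)"
    by (auto simp: fun_eq_iff)
  show "set_integrable lborel {0..1} (\<lambda>x. (if x \<le> L then g x else 0)^2)"
    unfolding e using split_int(1)[OF g2, of L 1 0] L by simp
  show "(if 1 \<le> L then G 1 else 0) = (if 0 \<le> L then G 0 else 0)" using L G0 by simp
  fix x :: real assume x: "x \<in> {0..1}"
  show "(if x \<le> L then G x else 0) = (if 0 \<le> L then G 0 else 0) +
      (LINT t:{0..x}|lborel. (if t \<le> L then g t else 0))"
  proof (cases "x \<le> L")
    case True
    have "(LINT t:{0..x}|lborel. (if t \<le> L then g t else 0)) = (LINT t:{0..x}|lborel. g t)"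
      using True by (intro set_lebesgue_integral_cong) auto
    also have "\<dots> = G x - G 0" using ftc[OF D g] x by auto
    finally show ?thesis using True L G0 by simp
  next
    case False
    have "(LINT t:{0..x}|lborel. (if t \<le> L then g t else 0)) = (LINT t:{0..L}|lborel. g t)"
      using split_int(2)[OF g, of L x 0] L False by simp
    also have "\<dots> = G L - G 0" using ftc[OF D g] L by auto
    finally show ?thesis using False L G0 GL by simp
  qed
qed

definition pp :: "real \<Rightarrow> real \<Rightarrow> real \<Rightarrow> real" where
  "pp c L x = 2*c*(L^2*x - 3*L*x^2 + 2*x^3)"
definition PP :: "real \<Rightarrow> real \<Rightarrow> real \<Rightarrow> real" where
  "PP c L x = c*(L^2*x^2 - 2*L*x^3 + x^4)"
definition qq :: "real \<Rightarrow> real \<Rightarrow> real \<Rightarrow> real" where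
  "qq c L x = 2*c*(L^2 - 6*L*x + 6*x^2)"
definition RR :: "real \<Rightarrow> real \<Rightarrow> real \<Rightarrow> real" where
  "RR c L x = 2*c^2*(L^4*x^3/3 - 3*L^3*x^4/2 + 13*L^2*x^5/5 - 2*L*x^6 + 4*x^7/7)"
definition QQ :: "real \<Rightarrow> real \<Rightarrow> real \<Rightarrow> real" where
  "QQ c L x = 4*c^2*(L^4*x - 6*L^3*x^2 + 16*L^2*x^3 - 18*L*x^4 + 36*x^5/5)"

lemma dP: "(PP c L has_real_derivative pp c L x) (at x)"
  unfolding PP_def pp_def
  by (auto intro!: derivative_eq_intros simp: algebra_simps power2_eq_square power3_eq_cube)

lemma dp: "(pp c L has_real_derivative qq c L x) (at x)"
  unfolding qq_def pp_def
  by (auto intro!: derivative_eq_intros simp: algebra_simps power2_eq_square power3_eq_cube)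

lemma dR: "(RR c L has_real_derivative (pp c L x)^2/2) (at x)"
  unfolding RR_def pp_def
  by (auto intro!: derivative_eq_intros simp: algebra_simps power2_eq_square power3_eq_cube power4_eq_xxxx power_numeral_reduce)

lemma dQ: "(QQ c L has_real_derivative (qq c L x)^2) (at x)"
  unfolding QQ_def qq_def
  by (auto intro!: derivative_eq_intros simp: algebra_simps power2_eq_square power3_eq_cube power4_eq_xxxx power_numeral_reduce)

lemma energy_nonneg:
  assumes "\<alpha>m \<ge> 0" "h \<ge> 0" "\<alpha>s \<ge> 0"
  shows "0 \<le> energy_1D \<alpha>m h \<alpha>s \<eta> w w' u' u'' \<Omega>"
proof -
  have sq: "0 \<le> (LINT x:A|lborel. (f x)^2)" for A and f :: "real \<Rightarrow> real"
    unfolding set_lebesgue_integral_def by (rule Bochner_Integration.integral_nonneg) (auto simp: indicator_def)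
  show ?thesis unfolding energy_1D_def
    using assms sq[of "{0..1}" "\<lambda>x. w' x + (u' x)^2 / 2 - \<eta>"] sq[of "{0..1}" u'']
      sq[of \<Omega> w'] sq[of \<Omega> w]
    by (intro add_nonneg_nonneg mult_nonneg_nonneg) auto
qed

lemma inf_le:
  assumes "\<alpha>m \<ge> 0" "h \<ge> 0" "\<alpha>s \<ge> 0" "admissible_1D \<theta> w w' u u' u'' \<Omega>"
  shows "E_inf_1D \<alpha>m h \<alpha>s \<eta> \<theta> \<le> energy_1D \<alpha>m h \<alpha>s \<eta> w w' u' u'' \<Omega>"
  unfolding E_inf_1D_def
proof (rule cInf_lower)
  show "energy_1D \<alpha>m h \<alpha>s \<eta> w w' u' u'' \<Omega> \<in> {energy_1D \<alpha>m h \<alpha>s \<eta> w w' u' u'' \<Omega> | w w' u u' u'' \<Omega>.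
            admissible_1D \<theta> w w' u u' u'' \<Omega>}" using assms(4) by blast
  show "bdd_below {energy_1D \<alpha>m h \<alpha>s \<eta> w w' u' u'' \<Omega> | w w' u u' u'' \<Omega>.
            admissible_1D \<theta> w w' u u' u'' \<Omega>}"
    by (rule bdd_belowI[of _ 0]) (use energy_nonneg[OF assms(1-3)] in auto)
qed

lemma Omega_props:
  assumes "0 < L" "L < 1"
  shows "closed_T1 ({L..1} \<union> {0})" "measure lborel ({L..1} \<union> {0}) = 1 - L"
    "{L..1} \<union> {0} \<in> sets lborel"
proof -
  show "closed_T1 ({L..1} \<union> {0})" unfolding closed_T1_def using assms by auto
  show "measure lborel ({L..1} \<union> {0}) = 1 - L"
    using assms by (subst measure_Un_null_set) auto
  show "{L..1} \<union> {0} \<in> sets lborel" by auto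
qed

lemma flat:
  assumes "\<alpha>m > 0" "0 < \<theta>" "\<theta> < 1" "h > 0" "\<alpha>s > 0"
  shows "E_inf_1D \<alpha>m h \<alpha>s \<eta> \<theta> \<le> \<alpha>m * \<eta>^2 * h"
proof -
  define L where "L = 1 - \<theta>"
  have L: "0 < L" "L < 1" using assms unfolding L_def by auto
  let ?z = "\<lambda>x::real. 0::real"
  have H: "H1_per ?z ?z" using H1_pw[OF L, of "\<lambda>_. 0" "\<lambda>_. 0"] by simp
  have adm: "admissible_1D \<theta> ?z ?z ?z ?z ?z ({L..1} \<union> {0})"
    unfolding admissible_1D_def H2_per_def using H Omega_props[OF L] L_def by auto
  have "E_inf_1D \<alpha>m h \<alpha>s \<eta> \<theta> \<le> energy_1D \<alpha>m h \<alpha>s \<eta> ?z ?z ?z ?z ({L..1} \<union> {0})"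
    using inf_le[OF _ _ _ adm] assms by auto
  also have "\<dots> = \<alpha>m * \<eta>^2 * h"
    unfolding energy_1D_def by (simp add: set_integral_const)
  finally show ?thesis .
qed

lemma blister:
  assumes am: "\<alpha>m > 0" and th: "0 < \<theta>" "\<theta> < 1" and h: "h > 0" and as: "\<alpha>s > 0" and et: "\<eta> > 0"
  shows "E_inf_1D \<alpha>m h \<alpha>s \<eta> \<theta> \<le> \<alpha>m * \<eta>^2 * \<theta> * h + 84 * h^3 * \<eta> / (1 - \<theta>)"
proof -
  define L where "L = 1 - \<theta>"
  have L: "0 < L" "L < 1" using th unfolding L_def by auto
  define c where "c = sqrt (105*\<eta>) / L^3"
  have c0: "c \<ge> 0" unfolding c_def using L et by auto
  have c2: "c^2 = 105*\<eta>/L^6" unfolding c_def using L et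
    by (simp add: power_divide power_mult_distrib flip: power_mult)
  define u where "u = (\<lambda>x. if x \<le> L then PP c L x else 0)"
  define u' where "u' = (\<lambda>x. if x \<le> L then pp c L x else 0)"
  define u'' where "u'' = (\<lambda>x. if x \<le> L then qq c L x else 0)"
  define W where "W = (\<lambda>x. \<eta>*x - RR c L x)"
  define gw where "gw = (\<lambda>x. \<eta> - (pp c L x)^2/2)"
  define w where "w = (\<lambda>x. if x \<le> L then W x else 0)"
  define w' where "w' = (\<lambda>x. if x \<le> L then gw x else 0)"
  define \<Omega> where "\<Omega> = {L..1} \<union> {0::real}"
  have RRL: "RR c L L = c^2 * L^7 / 105" unfolding RR_def by (simp add: algebra_simps eval_nat_numeral)
  have WL: "W L = 0" unfolding W_def RRL c2 using L by (simp add: field_simps eval_nat_numeral)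
  have W0: "W 0 = 0" unfolding W_def RR_def by simp
  have dW: "(W has_real_derivative gw x) (at x)" for x
    unfolding W_def gw_def by (auto intro!: derivative_eq_intros dR)
  have cgw: "continuous_on UNIV gw" unfolding gw_def pp_def by (intro continuous_intros) auto
  have cpp: "continuous_on UNIV (pp c L)" unfolding pp_def by (intro continuous_intros)
  have cqq: "continuous_on UNIV (qq c L)" unfolding qq_def by (intro continuous_intros)
  have cqq2: "continuous_on UNIV (\<lambda>x. (qq c L x)^2)" unfolding qq_def by (intro continuous_intros)
  have PP0: "PP c L 0 = 0" "PP c L L = 0" unfolding PP_def by (simp_all add: algebra_simps power2_eq_square power4_eq_xxxx power3_eq_cube)
  have pp0: "pp c L 0 = 0" "pp c L L = 0" unfolding pp_def by (simp_all add: algebra_simps power2_eq_square power3_eq_cube)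
  have Hw: "H1_per w w'" unfolding w_def w'_def by (rule H1_pw[OF L dW cgw W0 WL])
  have Hu: "H1_per u u'" unfolding u_def u'_def by (rule H1_pw[OF L dP cpp PP0])
  have Hu': "H1_per u' u''" unfolding u'_def u''_def by (rule H1_pw[OF L dp cqq pp0])
  have upos: "u x \<ge> 0" for x
  proof -
    have "PP c L x = c * (x*(L-x))^2" unfolding PP_def by (simp add: algebra_simps power2_eq_square power4_eq_xxxx power3_eq_cube)
    then show ?thesis unfolding u_def using c0 by auto
  qed
  have uO: "\<forall>x\<in>\<Omega>. u x = 0" unfolding \<Omega>_def u_def using PP0 by auto
  have adm: "admissible_1D \<theta> w w' u u' u'' \<Omega>"
    unfolding admissible_1D_def H2_per_def using Hw Hu Hu' upos uO Omega_props[OF L]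
    unfolding \<Omega>_def L_def by auto
  have e1: "(\<lambda>x. (w' x + (u' x)^2 / 2 - \<eta>)^2) = (\<lambda>x. if x \<le> L then (\<lambda>_. 0) x else \<eta>^2)"
    unfolding w'_def u'_def gw_def by (auto simp: fun_eq_iff)
  have I1: "(LINT x:{0..1}|lborel. (w' x + (u' x)^2 / 2 - \<eta>)^2) = \<eta>^2 * \<theta>"
    unfolding e1 using split_int(2)[of "\<lambda>_. 0" L 1 "\<eta>^2"] L by (simp add: L_def)
  have e2: "(\<lambda>x. (u'' x)^2) = (\<lambda>x. if x \<le> L then (qq c L x)^2 else 0)"
    unfolding u''_def by (auto simp: fun_eq_iff)
  have QQL: "QQ c L L = 4 * c^2 * L^5 / 5" unfolding QQ_def by (simp add: algebra_simps eval_nat_numeral)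
  have I2: "(LINT x:{0..1}|lborel. (u'' x)^2) = 84 * \<eta> / L"
  proof -
    have "(LINT x:{0..1}|lborel. (u'' x)^2) = (LINT x:{0..L}|lborel. (qq c L x)^2)"
      unfolding e2 using split_int(2)[OF cqq2, of L 1 0] L by simp
    also have "\<dots> = QQ c L L - QQ c L 0" using ftc[OF dQ cqq2] L by auto
    also have "\<dots> = 84 * \<eta> / L" unfolding QQL c2 using L by (simp add: QQ_def field_simps eval_nat_numeral)
    finally show ?thesis .
  qed
  have I3: "(LINT x:\<Omega>|lborel. (w x)^2) = 0"
  proof -
    have "(LINT x:\<Omega>|lborel. (w x)^2) = (LINT x:\<Omega>|lborel. 0)"
      by (rule set_lebesgue_integral_cong) (use W0 WL in \<open>auto simp: \<Omega>_def w_def\<close>)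
    then show ?thesis by simp
  qed
  have "E_inf_1D \<alpha>m h \<alpha>s \<eta> \<theta> \<le> energy_1D \<alpha>m h \<alpha>s \<eta> w w' u' u'' \<Omega>"
    using inf_le[OF _ _ _ adm] am h as by auto
  also have "\<dots> = \<alpha>m * \<eta>^2 * \<theta> * h + 84 * h^3 * \<eta> / (1 - \<theta>)"
    unfolding energy_1D_def I1 I2 I3 L_def by simp
  finally show ?thesis .
qed

theorem theorem1:
  shows "\<exists>K2>0. \<forall>\<alpha>m \<theta> h \<alpha>s \<eta> :: real.
     \<alpha>m > 0 \<longrightarrow> 0 < \<theta> \<longrightarrow> \<theta> < 1 \<longrightarrow> h > 0 \<longrightarrow> \<alpha>s > 0 \<longrightarrow> \<eta> > 0 \<longrightarrow>
     E_inf_1D \<alpha>m h \<alpha>s \<eta> \<theta>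
       \<le> min (\<alpha>m * \<eta>^2) (\<alpha>m * \<eta>^2 * \<theta> + K2 * h^2 * \<eta> / (1 - \<theta>)) * h"
proof (intro exI[of _ 84] conjI allI impI)
  fix \<alpha>m \<theta> h \<alpha>s \<eta> :: real
  assume a: "\<alpha>m > 0" "0 < \<theta>" "\<theta> < 1" "h > 0" "\<alpha>s > 0" "\<eta> > 0"
  have f: "E_inf_1D \<alpha>m h \<alpha>s \<eta> \<theta> \<le> \<alpha>m * \<eta>^2 * h" using flat a by auto
  have b: "E_inf_1D \<alpha>m h \<alpha>s \<eta> \<theta> \<le> (\<alpha>m * \<eta>^2 * \<theta> + 84 * h^2 * \<eta> / (1 - \<theta>)) * h"
    using blister[OF a] by (simp add: algebra_simps power3_eq_cube power2_eq_square)
  show "E_inf_1D \<alpha>m h \<alpha>s \<eta> \<theta>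
       \<le> min (\<alpha>m * \<eta>^2) (\<alpha>m * \<eta>^2 * \<theta> + 84 * h^2 * \<eta> / (1 - \<theta>)) * h"
    using f b by (simp add: min_def)
qed (simp)

end
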